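(* Let $P^{(1)},\dots,P^{(m)}$ be phase-free $n$-qubit Pauli strings given in sparse form, with weights $w_i=\operatorname{wt}(P^{(i)})$. In the computational model where dictionary lookup and update for a key of length $r$ cost $O(r)$ expected time, the locality-zeta counting algorithm (which for $i=1,\dots,m$ computes $c_i=(N-Z)/2$ with $Z=\sum_{A\subseteq\operatorname{supp}(P^{(i)})}(-2)^{|A|}\sum_{a\in\mathcal{L}_{P^{(i)}}(A)}D[(A,a)]$, adds $c_i$ to a running total, then increments $D[(A,P^{(i)}|_A)]$ for every $A\subseteq\operatorname{supp}(P^{(i)})$ and increments $N$; and returns the total, which is the number of unordered anticommuting pairs) runs in expected time \[ O\Big(\sum_{i=1}^m w_i3^{w_i}\Big) \] and uses space $O\big(\sum_{i=1}^m w_i2^{w_i}\big)$ for dictionary keys in addition to the input storage. In particular, if $w_i\le k$ for all $i$, the expected time is $O(mk3^k)$ and the additional space is $O(mk2^k)$.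
   Context: A phase-free $n$-qubit Pauli string is $P=(P_1,\dots,P_n)\in\{I,X,Y,Z\}^n$, stored sparsely as the pairs $(j,P_j)$, $j\in\operatorname{supp}(P)=\{j:P_j\neq I\}$; $\operatorname{wt}(P)=|\operatorname{supp}(P)|$. $D$ is a dictionary (initially empty, absent keys count as zero) with keys labeled patterns $(A,a)$, $A$ a set of positions, $a:A\to\{X,Y,Z\}$, of length $|A|$; $N$ starts at $0$. $\mathcal{L}_P(A)=\{a:A\to\{X,Y,Z\}: a(j)\neq P_j\ \forall j\in A\}$, and $P|_A$ is the labeling $j\mapsto P_j$ on $A$. *)

theory Defs
  imports Complex_Main
begin

datatype pauli = I | X | Y | Z

text \<open>A labeled
 pattern (A,a) with a : A -> {X,Y,Z} is represented by the Pauli string that equals a on A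
 and I elsewhere; its support is A, and its length is card A.\<close>
type_synonym pstring = "nat \<Rightarrow> pauli"

definition supp :: "pstring \<Rightarrow> nat set" where
  "supp P = {j. P j \<noteq> I}"

definition wt :: "pstring \<Rightarrow> nat" where
  "wt P = card (supp P)"

definition restr :: "pstring \<Rightarrow> nat set \<Rightarrow> pstring" where
  "restr P A = (\<lambda>j. if j \<in> A then P j else I)"

definition labelings :: "pstring \<Rightarrow> nat set \<Rightarrow> pstring set" where
  "labelings P A = {a. supp a = A \<and> (\<forall>j\<in>A. a j \<noteq> P j)}"

record state =
  Dict :: "pstring \<Rightarrow> int"
  Ncnt :: int
  Total :: int
  Time :: real
  Keys :: "pstring set"

definition init_state :: state where
  "init_state = \<lparr>Dict = (\<lambda>_. 0), Ncnt = 0, Total = 0, Time = 0, Keys = {}\<rparr>"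

text \<open>One iteration of the locality-zeta counting algorithm on string P. Each dictionary
 lookup/update with a key of length r is charged dcost r (its expected cost); each
 iteration is additionally charged one unit for the remaining constant work.\<close>
definition step :: "(nat \<Rightarrow> real) \<Rightarrow> state \<Rightarrow> pstring \<Rightarrow> state" where
  "step dcost st P =
    (let S = supp P;
         D = Dict st;
         Zv = (\<Sum>A\<in>Pow S. (-2) ^ card A * (\<Sum>a\<in>labelings P A. D a));
         ci = (Ncnt st - Zv) div 2;
         lookup_time = (\<Sum>A\<in>Pow S. \<Sum>a\<in>labelings P A. dcost (card A));
         upd_keys = restr P ` Pow S;
         update_time = (\<Sum>A\<in>Pow S. dcost (card A));
         D' = (\<lambda>k. if k \<in> upd_keys then D k + 1 else D k)
     in \<lparr>Dict = D', Ncnt = Ncnt st + 1, Total = Total st + ci,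
         Time = Time st + lookup_time + update_time + 1,
         Keys = Keys st \<union> upd_keys\<rparr>)"

definition run :: "(nat \<Rightarrow> real) \<Rightarrow> pstring list \<Rightarrow> state" where
  "run dcost Ps = foldl (step dcost) init_state Ps"

definition key_space :: "state \<Rightarrow> nat" where
  "key_space st = (\<Sum>k\<in>Keys st. card (supp k))"

end

theory Submission
  imports Defs "HOL-Library.FuncSet"
begin

lemma pauli_UNIV: "(UNIV::pauli set) = {I,X,Y,Z}"
proof -
  have "x \<in> {I,X,Y,Z}" for x :: pauli by (cases x) auto
  then show ?thesis by blast
qed

lemma card_lab:
  assumes "A \<subseteq> supp P" "finite A"
  shows "card (labelings P A) \<le> 2 ^ card A"
proof -
  have fin: "finite (UNIV::pauli set)" by (simp add: pauli_UNIV)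
  let ?B = "PiE A (\<lambda>j. UNIV - {P j, I})"
  have inj: "inj_on (\<lambda>a. restrict a A) (labelings P A)"
  proof (rule inj_onI)
    fix a b assume a: "a \<in> labelings P A" and b: "b \<in> labelings P A"
      and e: "restrict a A = restrict b A"
    show "a = b"
    proof
      fix x show "a x = b x"
      proof (cases "x \<in> A")
        case True then show ?thesis using e by (metis restrict_apply')
      next
        case False then show ?thesis using a b by (auto simp: labelings_def supp_def)
      qed
    qed
  qed
  have sub: "(\<lambda>a. restrict a A) ` labelings P A \<subseteq> ?B"
    by (auto simp: labelings_def supp_def)
  have finB: "finite ?B" using assms fin by (intro finite_PiE) auto
  have "card (labelings P A) \<le> card ?B" by (rule card_inj_on_le[OF inj sub finB])
  also have "card ?B = (\<Prod>j\<in>A. card (UNIV - {P j, I}))" by (rule card_PiE) (fact)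
  also have "\<dots> = (\<Prod>j\<in>A. 2)"
  proof (rule prod.cong)
    fix j assume "j \<in> A"
    then have "P j \<noteq> I" using assms by (auto simp: supp_def)
    then show "card (UNIV - {P j, I}) = 2" by (cases "P j") (auto simp: pauli_UNIV)
  qed simp
  finally show ?thesis by simp
qed

lemma sum_pow2: "finite S \<Longrightarrow> (\<Sum>A\<in>Pow S. (2::real)^card A) = 3^card S"
proof (induction S rule: finite_induct)
  case empty then show ?case by simp
next
  case (insert x F)
  have d: "Pow F \<inter> insert x ` Pow F = {}" using insert by auto
  have inj: "inj_on (insert x) (Pow F)" using insert
    by (auto simp: inj_on_def)
  have "(\<Sum>A\<in>Pow (insert x F). (2::real)^card A) =
        (\<Sum>A\<in>Pow F. (2::real)^card A) + (\<Sum>A\<in>insert x ` Pow F. (2::real)^card A)"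
    unfolding Pow_insert using insert d by (intro sum.union_disjoint) auto
  also have "(\<Sum>A\<in>insert x ` Pow F. (2::real)^card A) = (\<Sum>A\<in>Pow F. (2::real)^card (insert x A))"
    using inj by (simp add: sum.reindex)
  also have "\<dots> = (\<Sum>A\<in>Pow F. 2 * (2::real)^card A)"
  proof (rule sum.cong)
    fix A assume "A \<in> Pow F"
    then have "x \<notin> A" "finite A" using insert by (auto intro: finite_subset)
    then show "(2::real)^card (insert x A) = 2 * 2^card A" by simp
  qed simp
  finally show ?case using insert by (simp add: sum_distrib_left[symmetric])
qed

lemma step_time:
  assumes dc: "\<forall>r. 0 \<le> dcost r \<and> dcost r \<le> c * (real r + 1)"
    and fin: "finite (supp P)"
  shows "Time (step dcost st P) \<le> Time st + (4*c+1) * max 1 (real (wt P) * 3 ^ wt P)"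
proof -
  define S where "S = supp P"
  define w where "w = wt P"
  have wS: "w = card S" by (simp add: w_def S_def wt_def)
  have c0: "0 \<le> c" using dc by (metis add_0 mult.right_neutral of_nat_0 order_trans)
  have finS: "finite S" using fin S_def by simp
  have lk: "(\<Sum>A\<in>Pow S. \<Sum>a\<in>labelings P A. dcost (card A)) \<le> (\<Sum>A\<in>Pow S. 2^card A * (c * (w+1)))"
  proof (rule sum_mono)
    fix A assume A: "A \<in> Pow S"
    then have fA: "finite A" and cA: "card A \<le> w" using finS wS by (auto intro: finite_subset card_mono)
    have "(\<Sum>a\<in>labelings P A. dcost (card A)) = real (card (labelings P A)) * dcost (card A)" by simp
    also have "\<dots> \<le> 2^card A * (c * (w+1))"
    proof (rule mult_mono)
      show "real (card (labelings P A)) \<le> 2 ^ card A"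
        using card_lab[of A P] A fA S_def by (metis Pow_iff of_nat_le_iff of_nat_numeral of_nat_power)
      have "dcost (card A) \<le> c * (real (card A) + 1)" using dc by blast
      also have "\<dots> \<le> c * (w+1)" using cA c0 by (intro mult_left_mono) auto
      finally show "dcost (card A) \<le> c * (w+1)" .
    qed (use dc in auto)
    finally show "(\<Sum>a\<in>labelings P A. dcost (card A)) \<le> 2^card A * (c * (w+1))" .
  qed
  also have "\<dots> = c * (w+1) * 3^w"
    using sum_pow2[OF finS] wS by (simp add: sum_distrib_right[symmetric] mult.commute)
  finally have lk': "(\<Sum>A\<in>Pow S. \<Sum>a\<in>labelings P A. dcost (card A)) \<le> c * (w+1) * 3^w" .
  have up: "(\<Sum>A\<in>Pow S. dcost (card A)) \<le> (\<Sum>A\<in>Pow S. c * (w+1))"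
  proof (rule sum_mono)
    fix A assume A: "A \<in> Pow S"
    then have cA: "card A \<le> w" using finS wS by (auto intro: card_mono)
    have "dcost (card A) \<le> c * (real (card A) + 1)" using dc by blast
    also have "\<dots> \<le> c * (w+1)" using cA c0 by (intro mult_left_mono) auto
    finally show "dcost (card A) \<le> c * (w+1)" .
  qed
  also have "\<dots> = c * (w+1) * 2^w" using finS wS by (simp add: card_Pow)
  also have "\<dots> \<le> c * (w+1) * 3^w" using c0 by (intro mult_left_mono power_mono) auto
  finally have up': "(\<Sum>A\<in>Pow S. dcost (card A)) \<le> c * (w+1) * 3^w" .
  define M where "M = max 1 (real w * 3 ^ w)"
  have M1: "1 \<le> M" by (simp add: M_def)
  have wM: "(real w + 1) * 3^w \<le> 2 * M"
  proof (cases "w = 0")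
    case True then show ?thesis by (simp add: M_def)
  next
    case False
    then have h1: "(3::real)^w \<le> real w * 3^w" by simp
    have h2: "real w * 3^w \<le> M" by (simp add: M_def)
    have "(real w + 1) * 3^w = real w * 3^w + 3^w" by (simp add: algebra_simps)
    then show ?thesis using h1 h2 by linarith
  qed
  have "Time (step dcost st P) = Time st + (\<Sum>A\<in>Pow S. \<Sum>a\<in>labelings P A. dcost (card A))
        + (\<Sum>A\<in>Pow S. dcost (card A)) + 1"
    by (simp add: step_def Let_def S_def)
  also have "\<dots> \<le> Time st + 2 * (c * ((real w + 1) * 3^w)) + 1" using lk' up' by (simp add: algebra_simps)
  also have "\<dots> \<le> Time st + 2 * (c * (2 * M)) + 1" using wM c0
    by (intro add_mono mult_left_mono) auto
  also have "\<dots> \<le> Time st + (4*c+1) * M" using M1 by (simp add: algebra_simps)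
  finally show ?thesis by (simp add: M_def w_def)
qed


lemma run_snoc: "run dcost (xs @ [x]) = step dcost (run dcost xs) x"
  by (simp add: run_def)

lemma time_run:
  assumes dc: "\<forall>r. 0 \<le> dcost r \<and> dcost r \<le> c * (real r + 1)"
  shows "(\<forall>P\<in>set Ps. finite (supp P)) \<Longrightarrow>
    Time (run dcost Ps) \<le> (4*c+1) * (\<Sum>P\<leftarrow>Ps. max 1 (real (wt P) * 3 ^ wt P))"
proof (induction Ps rule: rev_induct)
  case Nil then show ?case by (simp add: run_def init_state_def)
next
  case (snoc x xs)
  have "Time (run dcost (xs @ [x])) \<le> Time (run dcost xs) + (4*c+1) * max 1 (real (wt x) * 3 ^ wt x)"
    unfolding run_snoc using snoc.prems by (intro step_time[OF dc]) auto
  then show ?case using snoc by (simp add: algebra_simps)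
qed

lemma supp_restr: "A \<subseteq> supp P \<Longrightarrow> supp (restr P A) = A"
  by (auto simp: supp_def restr_def)

lemma keys_run:
  "(\<forall>P\<in>set Ps. finite (supp P)) \<Longrightarrow>
    finite (Keys (run dcost Ps)) \<and> key_space (run dcost Ps) \<le> (\<Sum>P\<leftarrow>Ps. wt P * 2 ^ wt P)"
proof (induction Ps rule: rev_induct)
  case Nil then show ?case by (simp add: run_def init_state_def key_space_def)
next
  case (snoc x xs)
  define S where "S = supp x"
  have finS: "finite S" using snoc.prems S_def by simp
  have IH: "finite (Keys (run dcost xs))" "key_space (run dcost xs) \<le> (\<Sum>P\<leftarrow>xs. wt P * 2 ^ wt P)"
    using snoc by auto
  have K: "Keys (run dcost (xs @ [x])) = Keys (run dcost xs) \<union> restr x ` Pow S"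
    by (simp add: run_snoc step_def Let_def S_def)
  have fU: "finite (restr x ` Pow S)" using finS by simp
  have "key_space (run dcost (xs @ [x])) \<le> key_space (run dcost xs) + (\<Sum>k\<in>restr x ` Pow S. card (supp k))"
    unfolding key_space_def K using IH(1) fU by (simp add: sum_Un_nat)
  also have "(\<Sum>k\<in>restr x ` Pow S. card (supp k)) \<le> (\<Sum>A\<in>Pow S. card (supp (restr x A)))"
    using sum_image_le[of "Pow S" "\<lambda>k. card (supp k)" "restr x"] finS by (simp add: o_def)
  also have "\<dots> = (\<Sum>A\<in>Pow S. card A)"
    by (intro sum.cong) (auto simp: supp_restr S_def)
  also have "\<dots> \<le> (\<Sum>A\<in>Pow S. card S)"
    using finS by (intro sum_mono card_mono) auto
  also have "\<dots> = wt x * 2 ^ wt x" using finS by (simp add: card_Pow wt_def S_def)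
  finally show ?case using IH K fU by simp
qed

lemma sum_list_bound:
  fixes f :: "pstring \<Rightarrow> real"
  assumes "\<forall>P\<in>set Ps. f P \<le> M"
  shows "(\<Sum>P\<leftarrow>Ps. f P) \<le> real (length Ps) * M"
  using assms by (induction Ps) (auto simp: algebra_simps)

lemma mono3: "w \<le> k \<Longrightarrow> max 1 (real w * (b::real) ^ w) \<le> max 1 (real k * b ^ k)" if "1 \<le> b"
proof -
  assume "w \<le> k"
  then have "real w * b ^ w \<le> real k * b ^ k"
    using that by (intro mult_mono power_increasing) auto
  then show ?thesis by simp
qed

theorem theorem3:
  fixes dcost :: "nat \<Rightarrow> real" and c :: real
  assumes "\<forall>r. 0 \<le> dcost r \<and> dcost r \<le> c * (real r + 1)"
  shows "\<exists>C>0. \<forall>(n::nat) (Ps::pstring list).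
     (\<forall>P\<in>set Ps. supp P \<subseteq> {..<n}) \<longrightarrow>
       Time (run dcost Ps) \<le> C * (\<Sum>P\<leftarrow>Ps. max 1 (real (wt P) * 3 ^ wt P))
     \<and> real (key_space (run dcost Ps)) \<le> C * (\<Sum>P\<leftarrow>Ps. max 1 (real (wt P) * 2 ^ wt P))
     \<and> (\<forall>k::nat. (\<forall>P\<in>set Ps. wt P \<le> k) \<longrightarrow>
          Time (run dcost Ps) \<le> C * real (length Ps) * max 1 (real k * 3 ^ k)
        \<and> real (key_space (run dcost Ps)) \<le> C * real (length Ps) * max 1 (real k * 2 ^ k))"
proof -
  have c0: "0 \<le> c" using assms by (metis add_0 mult.right_neutral of_nat_0 order_trans)
  define C where "C = 4*c+1"
  have C1: "1 \<le> C" using c0 by (simp add: C_def)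
  show ?thesis
  proof (intro exI[of _ C] conjI allI impI)
    show "0 < C" using C1 by simp
    fix n :: nat and Ps :: "pstring list"
    assume "\<forall>P\<in>set Ps. supp P \<subseteq> {..<n}"
    then have fin: "\<forall>P\<in>set Ps. finite (supp P)" using finite_subset by blast
    have T: "Time (run dcost Ps) \<le> C * (\<Sum>P\<leftarrow>Ps. max 1 (real (wt P) * 3 ^ wt P))"
      using time_run[OF assms fin] by (simp add: C_def)
    have "real (key_space (run dcost Ps)) \<le> real (\<Sum>P\<leftarrow>Ps. wt P * 2 ^ wt P)"
      using keys_run[OF fin] by (simp only: of_nat_le_iff)
    also have "\<dots> = (\<Sum>P\<leftarrow>Ps. real (wt P) * 2 ^ wt P)" by (induction Ps) auto
    also have "\<dots> \<le> (\<Sum>P\<leftarrow>Ps. max 1 (real (wt P) * 2 ^ wt P))" by (intro sum_list_mono) simp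
    also have "\<dots> \<le> C * (\<Sum>P\<leftarrow>Ps. max 1 (real (wt P) * 2 ^ wt P))"
    proof -
      have "0 \<le> (\<Sum>P\<leftarrow>Ps. max 1 (real (wt P) * 2 ^ wt P))" by (intro sum_list_nonneg) auto
      then show ?thesis using C1 by (simp add: mult_le_cancel_right1)
    qed
    finally have KS: "real (key_space (run dcost Ps)) \<le> C * (\<Sum>P\<leftarrow>Ps. max 1 (real (wt P) * 2 ^ wt P))" .
    show "Time (run dcost Ps) \<le> C * (\<Sum>P\<leftarrow>Ps. max 1 (real (wt P) * 3 ^ wt P))" by (fact T)
    show "real (key_space (run dcost Ps)) \<le> C * (\<Sum>P\<leftarrow>Ps. max 1 (real (wt P) * 2 ^ wt P))" by (fact KS)
    fix k :: nat assume wk: "\<forall>P\<in>set Ps. wt P \<le> k"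
    have B3: "(\<Sum>P\<leftarrow>Ps. max 1 (real (wt P) * 3 ^ wt P)) \<le> real (length Ps) * max 1 (real k * 3 ^ k)"
      using wk by (intro sum_list_bound ballI mono3) auto
    then show "Time (run dcost Ps) \<le> C * real (length Ps) * max 1 (real k * 3 ^ k)"
      using order_trans[OF T mult_left_mono[OF B3]] C1 by (simp add: mult.assoc)
    have B2: "(\<Sum>P\<leftarrow>Ps. max 1 (real (wt P) * 2 ^ wt P)) \<le> real (length Ps) * max 1 (real k * 2 ^ k)"
      using wk by (intro sum_list_bound ballI mono3) auto
    then show "real (key_space (run dcost Ps)) \<le> C * real (length Ps) * max 1 (real k * 2 ^ k)"
      using order_trans[OF KS mult_left_mono[OF B2]] C1 by (simp add: mult.assoc)
  qed
qed

end
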